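(* Let $\mathcal M=(S,A,P)$ be an MDP, $T\subseteq S$ a set of sink target states, $\mathcal M'$ the pruned MDP and $s_0\in S'$. For every strategy $\sigma\in\Sigma_{\mathcal M,s_0}(\Diamond T)$, $$\mathbb E'_{\sigma,s_0}(\mathrm{len}_T)=\mathbb E_{\sigma,s_0}(\mathrm{len}_T\mid\Diamond T).$$
   Context: An MDP is $\mathcal M=(S,A,P)$ with $S,A$ finite and $P$ a partial map $S\times A\to\mathrm{Dist}(S)$; $a$ is legal at $s$ if $P(s,a)$ is defined; $P(s,a,s')=P(s,a)(s')$. A strategy maps finite paths to distributions over legal actions at the last state (history-dependent, randomized). $\Pr_{\sigma,s}$, $\mathbb E_{\sigma,s}$ are the induced probability measure and expectation on infinite paths from $s$. States of $T$ are sinks; $\Diamond T$ is the event of visiting $T$; $\mathrm{Val}(s)=\max_\sigma\Pr_{\sigma,s}(\Diamond T)$; $\Sigma_{\mathcal M,s}(\Diamond T)$ is the set of strategies with $\Pr_{\sigma,s}(\Diamond T)=\mathrm{Val}(s)$. For an infinite path $\rho$, $\mathrm{len}_T(\rho)$ is the least $i$ with $\rho[i]\in T$ (the $(i+1)$-th state). $\mathbb E_{\sigma,s}(\mathrm{len}_T\mid\Diamond T)=\sum_{r\ge0}r\cdot\Pr_{\sigma,s}(\Diamond T\wedge \mathrm{len}_T=r)/\Pr_{\sigma,s}(\Diamond T)$. $\mathrm{Opt}_{\mathcal M}=\{(s,a): a\text{ legal at }s,\ \mathrm{Val}(s)=\sum_{s'}P(s,a,s')\mathrm{Val}(s')\}$;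 $\Sigma^{\mathrm{Opt}}_{\mathcal M}$ is the set of strategies that, after every finite path $\rho$, only give positive probability to actions $a$ with $(\mathrm{last}(\rho),a)\in\mathrm{Opt}_{\mathcal M}$; every strategy in $\Sigma_{\mathcal M,s}(\Diamond T)$ lies in $\Sigma^{\mathrm{Opt}}_{\mathcal M}$. The pruned MDP $\mathcal M'=(S',A,P')$ has $S'=\{s:\mathrm{Val}(s)>0\}$ and $P'(s,a,s')=P(s,a,s')\mathrm{Val}(s')/\mathrm{Val}(s)$ if $s\in S'$ and $(s,a)\in\mathrm{Opt}_{\mathcal M}$ (undefined otherwise). Strategies in $\Sigma^{\mathrm{Opt}}_{\mathcal M}$ are identified with strategies of $\mathcal M'$ by restriction to finite paths of $\mathcal M'$; $\mathbb E'_{\sigma,s}$ is the expectation in $\mathcal M'$. *)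

theory Defs
  imports Complex_Main "HOL-Library.Extended_Nonnegative_Real"
begin

text \<open>An MDP (S,A,P) with S = UNIV :: 's set and A = UNIV :: 'a set (finite types).
  P s a = None means a is not legal at s; P s a = Some d gives the distribution d.\<close>

type_synonym ('s,'a) mdp = "'s \<Rightarrow> 'a \<Rightarrow> ('s \<Rightarrow> real) option"

definition is_mdp :: "('s::finite,'a::finite) mdp \<Rightarrow> bool" where
  "is_mdp P \<longleftrightarrow>
     (\<forall>s a d. P s a = Some d \<longrightarrow> (\<forall>t. 0 \<le> d t) \<and> sum d UNIV = 1) \<and>
     (\<forall>s. \<exists>a. P s a \<noteq> None)"

definition trans :: "('s,'a) mdp \<Rightarrow> 's \<Rightarrow> 'a \<Rightarrow> 's \<Rightarrow> real" where
  "trans P s a t = (case P s a of None \<Rightarrow> 0 | Some d \<Rightarrow> d t)"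

definition sinks :: "('s,'a) mdp \<Rightarrow> 's set \<Rightarrow> bool" where
  "sinks P T \<longleftrightarrow> (\<forall>t\<in>T. \<forall>a. P t a \<noteq> None \<longrightarrow> trans P t a t = 1)"

text \<open>History-dependent randomized strategies: a finite path (nonempty list of states)
  is mapped to a distribution over the actions legal at its last state.\<close>
definition strategies :: "('s::finite,'a::finite) mdp \<Rightarrow> ('s list \<Rightarrow> 'a \<Rightarrow> real) set" where
  "strategies P = {\<sigma>. \<forall>xs. xs \<noteq> [] \<longrightarrow>
       (\<forall>a. 0 \<le> \<sigma> xs a) \<and> sum (\<sigma> xs) UNIV = 1 \<and>
       (\<forall>a. 0 < \<sigma> xs a \<longrightarrow> P (last xs) a \<noteq> None)}"

text \<open>Probability of the cylinder set of infinite paths with prefix xs (starting at hd xs).\<close>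
definition path_prob :: "('s,'a::finite) mdp \<Rightarrow> ('s list \<Rightarrow> 'a \<Rightarrow> real) \<Rightarrow> 's list \<Rightarrow> real" where
  "path_prob P \<sigma> xs =
     (\<Prod>i<length xs - 1. \<Sum>a\<in>UNIV. \<sigma> (take (Suc i) xs) a * trans P (xs ! i) a (xs ! Suc i))"

text \<open>Pr_{\<sigma>,s}(\<Diamond>T \<and> len_T = r): union of cylinders of prefixes of length r+1 that
  start in s and visit T for the first time at index r.\<close>
definition hit_prob :: "('s::finite,'a::finite) mdp \<Rightarrow> 's set \<Rightarrow> ('s list \<Rightarrow> 'a \<Rightarrow> real) \<Rightarrow> 's \<Rightarrow> nat \<Rightarrow> real" where
  "hit_prob P T \<sigma> s r =
     (\<Sum>xs\<in>{xs. length xs = Suc r \<and> xs ! 0 = s \<and> xs ! r \<in> T \<and> (\<forall>i<r. xs ! i \<notin> T)}.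
        path_prob P \<sigma> xs)"

text \<open>Pr_{\<sigma>,s}(\<Diamond>T), by countable additivity over the disjoint events len_T = r.\<close>
definition reach_prob :: "('s::finite,'a::finite) mdp \<Rightarrow> 's set \<Rightarrow> ('s list \<Rightarrow> 'a \<Rightarrow> real) \<Rightarrow> 's \<Rightarrow> ennreal" where
  "reach_prob P T \<sigma> s = (\<Sum>r. ennreal (hit_prob P T \<sigma> s r))"

definition Val :: "('s::finite,'a::finite) mdp \<Rightarrow> 's set \<Rightarrow> 's \<Rightarrow> real" where
  "Val P T s = enn2real (SUP \<sigma>\<in>strategies P. reach_prob P T \<sigma> s)"

definition opt_strategies :: "('s::finite,'a::finite) mdp \<Rightarrow> 's set \<Rightarrow> 's \<Rightarrow> ('s list \<Rightarrow> 'a \<Rightarrow> real) set" where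
  "opt_strategies P T s = {\<sigma>\<in>strategies P. reach_prob P T \<sigma> s = ennreal (Val P T s)}"

definition Opt :: "('s::finite,'a::finite) mdp \<Rightarrow> 's set \<Rightarrow> ('s \<times> 'a) set" where
  "Opt P T = {(s,a). P s a \<noteq> None \<and> Val P T s = (\<Sum>t\<in>UNIV. trans P s a t * Val P T t)}"

text \<open>The pruned MDP M'. States outside S' = {s. Val s > 0} have no legal actions
  (and are never reached from S' since P'(s,a,s') = 0 when Val s' = 0).\<close>
definition pruned :: "('s::finite,'a::finite) mdp \<Rightarrow> 's set \<Rightarrow> ('s,'a) mdp" where
  "pruned P T s a =
     (if 0 < Val P T s \<and> (s,a) \<in> Opt P T
      then Some (\<lambda>t. trans P s a t * Val P T t / Val P T s) else None)"

text \<open>E_{\<sigma>,s}(len_T), where len_T = \<infinity> on paths not visiting T.\<close>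
definition exp_len :: "('s::finite,'a::finite) mdp \<Rightarrow> 's set \<Rightarrow> ('s list \<Rightarrow> 'a \<Rightarrow> real) \<Rightarrow> 's \<Rightarrow> ennreal" where
  "exp_len P T \<sigma> s =
     (\<Sum>r. of_nat r * ennreal (hit_prob P T \<sigma> s r)) + top * (1 - reach_prob P T \<sigma> s)"

definition cond_exp_len :: "('s::finite,'a::finite) mdp \<Rightarrow> 's set \<Rightarrow> ('s list \<Rightarrow> 'a \<Rightarrow> real) \<Rightarrow> 's \<Rightarrow> ennreal" where
  "cond_exp_len P T \<sigma> s =
     (\<Sum>r. of_nat r * ennreal (hit_prob P T \<sigma> s r)) / reach_prob P T \<sigma> s"

end

theory Submission
  imports Defs
begin

definition wt :: "('s,'a::finite) mdp \<Rightarrow> ('s list \<Rightarrow> 'a \<Rightarrow> real) \<Rightarrow> 's \<Rightarrow> 's \<Rightarrow> real" where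
  "wt P \<sigma> s t = (\<Sum>a\<in>UNIV. \<sigma> [s] a * trans P s a t)"

lemma path_prob_Cons:
  assumes "ys \<noteq> []"
  shows "path_prob P \<sigma> (s#ys) = wt P \<sigma> s (hd ys) * path_prob P (\<lambda>xs. \<sigma> (s#xs)) ys"
proof -
  obtain m where m: "length ys = Suc m" using assms by (cases ys) auto
  have "path_prob P \<sigma> (s#ys) = (\<Prod>i<Suc m. \<Sum>a\<in>UNIV. \<sigma> (take (Suc i) (s#ys)) a * trans P ((s#ys) ! i) a ((s#ys) ! Suc i))"
    unfolding path_prob_def using m by simp
  also have "\<dots> = wt P \<sigma> s (hd ys) * (\<Prod>i<m. \<Sum>a\<in>UNIV. \<sigma> (s # take (Suc i) ys) a * trans P (ys ! i) a (ys ! Suc i))"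
    unfolding prod.lessThan_Suc_shift wt_def using assms by (simp add: hd_conv_nth)
  also have "\<dots> = wt P \<sigma> s (hd ys) * path_prob P (\<lambda>xs. \<sigma> (s#xs)) ys"
    unfolding path_prob_def using m by simp
  finally show ?thesis .
qed

lemma finite_len: "finite {xs::('s::finite) list. length xs = n \<and> Q xs}"
proof -
  have "finite {xs::'s list. set xs \<subseteq> UNIV \<and> length xs = n}" by (rule finite_lists_length_eq) simp
  then show ?thesis by (rule rev_finite_subset) auto
qed

lemma hit_prob_0: "hit_prob P T \<sigma> s 0 = (if s \<in> T then 1 else 0)"
proof -
  have "{xs. length xs = Suc 0 \<and> xs ! 0 = s \<and> xs ! 0 \<in> T \<and> (\<forall>i<0. xs ! i \<notin> T)} = (if s \<in> T then {[s]} else {})"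
    by (auto simp: length_Suc_conv)
  then show ?thesis unfolding hit_prob_def by (simp add: path_prob_def)
qed

lemma hit_prob_Suc_T: "s \<in> T \<Longrightarrow> hit_prob P T \<sigma> s (Suc r) = 0"
proof -
  assume "s \<in> T"
  then have e: "{xs. length xs = Suc (Suc r) \<and> xs ! 0 = s \<and> xs ! Suc r \<in> T \<and> (\<forall>i<Suc r. xs ! i \<notin> T)} = {}"
    using zero_less_Suc by blast
  show ?thesis unfolding hit_prob_def e by simp
qed

lemma hit_prob_Suc:
  assumes "s \<notin> T"
  shows "hit_prob P T \<sigma> s (Suc r) = (\<Sum>t\<in>UNIV. wt P \<sigma> s t * hit_prob P T (\<lambda>xs. \<sigma> (s#xs)) t r)"
proof -
  define B where "B = {ys::'a list. length ys = Suc r \<and> ys ! r \<in> T \<and> (\<forall>i<r. ys ! i \<notin> T)}"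
  have fB: "finite B" unfolding B_def by (rule finite_len)
  have eq: "{xs. length xs = Suc (Suc r) \<and> xs ! 0 = s \<and> xs ! Suc r \<in> T \<and> (\<forall>i<Suc r. xs ! i \<notin> T)} = (\<lambda>ys. s#ys) ` B"
  proof (rule set_eqI, rule iffI)
    fix xs assume "xs \<in> {xs. length xs = Suc (Suc r) \<and> xs ! 0 = s \<and> xs ! Suc r \<in> T \<and> (\<forall>i<Suc r. xs ! i \<notin> T)}"
    then have h: "length xs = Suc (Suc r)" "xs ! Suc r \<in> T" "\<forall>i<Suc r. xs ! i \<notin> T" "xs ! 0 = s" by auto
    then obtain ys where ys: "xs = s # ys" by (cases xs) auto
    have a1: "\<forall>i<r. ys ! i \<notin> T"
    proof (intro allI impI)
      fix i assume "i<r" then have "Suc i < Suc r" by simp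
      then show "ys!i \<notin> T" using h(3) ys by (metis nth_Cons_Suc)
    qed
    have "length ys = Suc r" "ys ! r \<in> T" using h(1,2) ys by auto
    then have "ys \<in> B" unfolding B_def using a1 by blast
    then show "xs \<in> (\<lambda>ys. s#ys) ` B" using ys by blast
  next
    fix xs assume "xs \<in> (\<lambda>ys. s#ys) ` B"
    then obtain ys where ys: "xs = s#ys" "ys \<in> B" by blast
    have "\<forall>i<Suc r. xs ! i \<notin> T"
    proof (intro allI impI)
      fix i assume "i < Suc r" then show "xs ! i \<notin> T" using assms ys unfolding B_def by (cases i) auto
    qed
    then show "xs \<in> {xs. length xs = Suc (Suc r) \<and> xs ! 0 = s \<and> xs ! Suc r \<in> T \<and> (\<forall>i<Suc r. xs ! i \<notin> T)}"
      using ys unfolding B_def by auto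
  qed
  have "hit_prob P T \<sigma> s (Suc r) = (\<Sum>ys\<in>B. path_prob P \<sigma> (s#ys))"
    unfolding hit_prob_def eq by (simp add: sum.reindex)
  also have "\<dots> = (\<Sum>ys\<in>B. wt P \<sigma> s (ys!0) * path_prob P (\<lambda>xs. \<sigma> (s#xs)) ys)"
  proof (rule sum.cong[OF refl])
    fix ys assume "ys \<in> B" then have ne: "ys \<noteq> []" unfolding B_def by auto
    show "path_prob P \<sigma> (s#ys) = wt P \<sigma> s (ys!0) * path_prob P (\<lambda>xs. \<sigma> (s#xs)) ys"
      using path_prob_Cons[OF ne] hd_conv_nth[OF ne] by simp
  qed
  also have "\<dots> = (\<Sum>ys\<in>B. \<Sum>t\<in>UNIV. if ys!0 = t then wt P \<sigma> s t * path_prob P (\<lambda>xs. \<sigma> (s#xs)) ys else 0)"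
    by simp
  also have "\<dots> = (\<Sum>t\<in>UNIV. \<Sum>ys\<in>B. if ys!0 = t then wt P \<sigma> s t * path_prob P (\<lambda>xs. \<sigma> (s#xs)) ys else 0)"
    by (rule sum.swap)
  also have "\<dots> = (\<Sum>t\<in>UNIV. wt P \<sigma> s t * hit_prob P T (\<lambda>xs. \<sigma> (s#xs)) t r)"
  proof (rule sum.cong)
    fix t
    have "(\<Sum>ys\<in>B. if ys!0 = t then wt P \<sigma> s t * path_prob P (\<lambda>xs. \<sigma> (s#xs)) ys else 0)
        = (\<Sum>ys\<in>B \<inter> {ys. ys!0 = t}. wt P \<sigma> s t * path_prob P (\<lambda>xs. \<sigma> (s#xs)) ys)"
      using fB by (simp add: sum.inter_restrict)
    also have "B \<inter> {ys. ys!0 = t} = {xs. length xs = Suc r \<and> xs ! 0 = t \<and> xs ! r \<in> T \<and> (\<forall>i<r. xs ! i \<notin> T)}"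
      unfolding B_def by auto
    finally show "(\<Sum>ys\<in>B. if ys!0 = t then wt P \<sigma> s t * path_prob P (\<lambda>xs. \<sigma> (s#xs)) ys else 0)
       = wt P \<sigma> s t * hit_prob P T (\<lambda>xs. \<sigma> (s#xs)) t r"
      unfolding hit_prob_def by (simp add: sum_distrib_left)
  qed simp
  finally show ?thesis .
qed

lemma trans_nonneg: "is_mdp P \<Longrightarrow> 0 \<le> trans P s a t"
  unfolding is_mdp_def trans_def by (cases "P s a") auto

lemma trans_sum: "is_mdp P \<Longrightarrow> P s a \<noteq> None \<Longrightarrow> (\<Sum>t\<in>UNIV. trans P s a t) = 1"
  unfolding is_mdp_def trans_def by (cases "P s a") auto

lemma strat_nonneg: "\<sigma> \<in> strategies P \<Longrightarrow> xs \<noteq> [] \<Longrightarrow> 0 \<le> \<sigma> xs a"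
  unfolding strategies_def by auto

lemma strat_sum: "\<sigma> \<in> strategies P \<Longrightarrow> xs \<noteq> [] \<Longrightarrow> sum (\<sigma> xs) UNIV = 1"
  unfolding strategies_def by auto

lemma strat_legal: "\<sigma> \<in> strategies P \<Longrightarrow> xs \<noteq> [] \<Longrightarrow> 0 < \<sigma> xs a \<Longrightarrow> P (last xs) a \<noteq> None"
  unfolding strategies_def by auto

lemma shift_strat: assumes h: "\<sigma> \<in> strategies P" shows "(\<lambda>xs. \<sigma> (s#xs)) \<in> strategies P"
  unfolding strategies_def
proof (intro CollectI allI impI)
  fix xs :: "'a list" assume ne: "xs \<noteq> []"
  have ne2: "s#xs \<noteq> []" by simp
  have H: "\<forall>ys. ys \<noteq> [] \<longrightarrow> (\<forall>a. 0 \<le> \<sigma> ys a) \<and> sum (\<sigma> ys) UNIV = 1 \<and> (\<forall>a. 0 < \<sigma> ys a \<longrightarrow> P (last ys) a \<noteq> None)"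
    using h unfolding strategies_def by simp
  have "(\<forall>a. 0 \<le> \<sigma> (s#xs) a) \<and> sum (\<sigma> (s#xs)) UNIV = 1 \<and> (\<forall>a. 0 < \<sigma> (s#xs) a \<longrightarrow> P (last (s#xs)) a \<noteq> None)"
    using spec[OF H, of "s#xs"] ne2 by (rule mp)
  then show "(\<forall>a. 0 \<le> \<sigma> (s#xs) a) \<and> sum (\<sigma> (s#xs)) UNIV = 1 \<and> (\<forall>a. 0 < \<sigma> (s#xs) a \<longrightarrow> P (last xs) a \<noteq> None)"
    using ne by simp
qed

lemma path_prob_nonneg:
  assumes "is_mdp P" "\<sigma> \<in> strategies P" shows "0 \<le> path_prob P \<sigma> xs"
  unfolding path_prob_def
proof (intro prod_nonneg sum_nonneg mult_nonneg_nonneg)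
  fix i a assume "i \<in> {..<length xs - 1}"
  then have "take (Suc i) xs \<noteq> []" by auto
  then show "0 \<le> \<sigma> (take (Suc i) xs) a" by (rule strat_nonneg[OF assms(2)])
qed (rule trans_nonneg[OF assms(1)])

lemma hit_nonneg: "is_mdp P \<Longrightarrow> \<sigma> \<in> strategies P \<Longrightarrow> 0 \<le> hit_prob P T \<sigma> s r"
  unfolding hit_prob_def by (intro sum_nonneg path_prob_nonneg)

lemma wt_nonneg: "is_mdp P \<Longrightarrow> \<sigma> \<in> strategies P \<Longrightarrow> 0 \<le> wt P \<sigma> s t"
  unfolding wt_def by (intro sum_nonneg mult_nonneg_nonneg strat_nonneg trans_nonneg) auto

lemma wt_sum:
  assumes "is_mdp P" "\<sigma> \<in> strategies P" shows "(\<Sum>t\<in>UNIV. wt P \<sigma> s t) = 1"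
proof -
  have "(\<Sum>t\<in>UNIV. wt P \<sigma> s t) = (\<Sum>a\<in>UNIV. \<sigma> [s] a * (\<Sum>t\<in>UNIV. trans P s a t))"
    unfolding wt_def sum_distrib_left by (rule sum.swap)
  also have "\<dots> = (\<Sum>a\<in>UNIV. \<sigma> [s] a)"
  proof (rule sum.cong[OF refl])
    fix a show "\<sigma> [s] a * (\<Sum>t\<in>UNIV. trans P s a t) = \<sigma> [s] a"
    proof (cases "0 < \<sigma> [s] a")
      case True then have "P s a \<noteq> None" using strat_legal[OF assms(2), of "[s]"] by auto
      then show ?thesis using trans_sum[OF assms(1)] by simp
    next
      case False then have "\<sigma> [s] a = 0" using strat_nonneg[OF assms(2), of "[s]" a] by simp
      then show ?thesis by simp
    qed
  qed
  also have "\<dots> = 1" using strat_sum[OF assms(2), of "[s]"] by simp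
  finally show ?thesis .
qed

lemma partial_le1:
  assumes "is_mdp P" shows "\<sigma> \<in> strategies P \<Longrightarrow> (\<Sum>r<n. hit_prob P T \<sigma> s r) \<le> 1"
proof (induction n arbitrary: \<sigma> s)
  case 0 then show ?case by simp
next
  case (Suc n)
  have "(\<Sum>r<Suc n. hit_prob P T \<sigma> s r) = hit_prob P T \<sigma> s 0 + (\<Sum>r<n. hit_prob P T \<sigma> s (Suc r))"
    by (simp only: sum.lessThan_Suc_shift)
  also have "\<dots> \<le> 1"
  proof (cases "s \<in> T")
    case True then show ?thesis by (simp add: hit_prob_0 hit_prob_Suc_T)
  next
    case False
    have "(\<Sum>r<n. hit_prob P T \<sigma> s (Suc r)) = (\<Sum>r<n. \<Sum>t\<in>UNIV. wt P \<sigma> s t * hit_prob P T (\<lambda>xs. \<sigma> (s#xs)) t r)"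
      by (simp only: hit_prob_Suc[OF False])
    also have "\<dots> = (\<Sum>t\<in>UNIV. wt P \<sigma> s t * (\<Sum>r<n. hit_prob P T (\<lambda>xs. \<sigma> (s#xs)) t r))"
      unfolding sum_distrib_left by (rule sum.swap)
    also have "\<dots> \<le> (\<Sum>t\<in>UNIV. wt P \<sigma> s t * 1)"
      by (intro sum_mono mult_left_mono Suc.IH shift_strat Suc.prems wt_nonneg assms)
    also have "\<dots> = 1" using wt_sum[OF assms Suc.prems] by simp
    finally show ?thesis using False by (simp add: hit_prob_0)
  qed
  finally show ?case .
qed

definition rp :: "('s::finite,'a::finite) mdp \<Rightarrow> 's set \<Rightarrow> ('s list \<Rightarrow> 'a \<Rightarrow> real) \<Rightarrow> 's \<Rightarrow> real" where
  "rp P T \<sigma> s = suminf (hit_prob P T \<sigma> s)"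

lemma hit_summable: "is_mdp P \<Longrightarrow> \<sigma> \<in> strategies P \<Longrightarrow> summable (hit_prob P T \<sigma> s)"
  by (rule summableI_nonneg_bounded[where x=1]) (auto intro: hit_nonneg partial_le1)

lemma rp_bounds: "is_mdp P \<Longrightarrow> \<sigma> \<in> strategies P \<Longrightarrow> 0 \<le> rp P T \<sigma> s \<and> rp P T \<sigma> s \<le> 1"
  unfolding rp_def using hit_summable
  by (auto intro!: suminf_nonneg suminf_le_const hit_nonneg partial_le1)

lemma reach_rp: "is_mdp P \<Longrightarrow> \<sigma> \<in> strategies P \<Longrightarrow> reach_prob P T \<sigma> s = ennreal (rp P T \<sigma> s)"
  unfolding reach_prob_def rp_def by (rule suminf_ennreal2) (auto intro: hit_nonneg hit_summable)

lemma hit_le_rp: assumes "is_mdp P" "\<sigma> \<in> strategies P" shows "hit_prob P T \<sigma> s r \<le> rp P T \<sigma> s"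
  unfolding rp_def using sum_le_suminf[OF hit_summable[OF assms], of "{r}"] hit_nonneg[OF assms] by auto

lemma rp_T: "s \<in> T \<Longrightarrow> rp P T \<sigma> s = 1"
proof -
  assume "s \<in> T"
  then have "hit_prob P T \<sigma> s = (\<lambda>r. if r = 0 then 1 else 0)"
    by (auto simp: fun_eq_iff hit_prob_0 hit_prob_Suc_T gr0_conv_Suc)
  then have "rp P T \<sigma> s = (\<Sum>r. if r = 0 then (\<lambda>_. 1::real) r else 0)" unfolding rp_def by simp
  also have "\<dots> = 1" by (rule sums_unique[OF sums_single, symmetric])
  finally show ?thesis .
qed

lemma rp_Suc:
  assumes "is_mdp P" "\<sigma> \<in> strategies P" "s \<notin> T"
  shows "rp P T \<sigma> s = (\<Sum>t\<in>UNIV. wt P \<sigma> s t * rp P T (\<lambda>xs. \<sigma> (s#xs)) t)"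
proof -
  have sm: "summable (hit_prob P T \<sigma> s)" by (rule hit_summable[OF assms(1,2)])
  have "rp P T \<sigma> s = (\<Sum>r. hit_prob P T \<sigma> s (Suc r))"
    unfolding rp_def using suminf_split_head[OF sm] assms(3) by (simp add: hit_prob_0)
  also have "\<dots> = (\<Sum>r. \<Sum>t\<in>UNIV. wt P \<sigma> s t * hit_prob P T (\<lambda>xs. \<sigma> (s#xs)) t r)"
    using assms(3) by (simp add: hit_prob_Suc)
  also have "\<dots> = (\<Sum>t\<in>UNIV. \<Sum>r. wt P \<sigma> s t * hit_prob P T (\<lambda>xs. \<sigma> (s#xs)) t r)"
    by (rule suminf_sum) (intro summable_mult hit_summable shift_strat assms)
  also have "\<dots> = (\<Sum>t\<in>UNIV. wt P \<sigma> s t * rp P T (\<lambda>xs. \<sigma> (s#xs)) t)"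
    unfolding rp_def
    by (rule sum.cong[OF refl], rule suminf_mult, intro hit_summable shift_strat assms)
  finally show ?thesis .
qed

lemma hit_cong:
  assumes "\<And>ys. ys \<noteq> [] \<Longrightarrow> hd ys = t \<Longrightarrow> \<sigma> ys = \<tau> ys"
  shows "hit_prob P T \<sigma> t r = hit_prob P T \<tau> t r"
  unfolding hit_prob_def
proof (rule sum.cong[OF refl])
  fix xs assume "xs \<in> {xs. length xs = Suc r \<and> xs ! 0 = t \<and> xs ! r \<in> T \<and> (\<forall>i<r. xs ! i \<notin> T)}"
  then have x: "length xs = Suc r" "xs ! 0 = t" by auto
  show "path_prob P \<sigma> xs = path_prob P \<tau> xs" unfolding path_prob_def
  proof (intro prod.cong refl sum.cong)
    fix i a assume "i \<in> {..<length xs - 1}"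
    have ne: "take (Suc i) xs \<noteq> []" using x by (cases xs) auto
    have "hd (take (Suc i) xs) = t" using x by (cases xs) auto
    then show "\<sigma> (take (Suc i) xs) a * trans P (xs ! i) a (xs ! Suc i) =
          \<tau> (take (Suc i) xs) a * trans P (xs ! i) a (xs ! Suc i)" using assms[OF ne] by simp
  qed
qed

lemma rp_cong:
  assumes "\<And>ys. ys \<noteq> [] \<Longrightarrow> hd ys = t \<Longrightarrow> \<sigma> ys = \<tau> ys"
  shows "rp P T \<sigma> t = rp P T \<tau> t"
proof -
  have "hit_prob P T \<sigma> t = hit_prob P T \<tau> t" by (rule ext, rule hit_cong, rule assms)
  then show ?thesis unfolding rp_def by simp
qed

definition sig0 :: "('s,'a) mdp \<Rightarrow> 's list \<Rightarrow> 'a \<Rightarrow> real" where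
  "sig0 P xs = (\<lambda>a. if a = (SOME a. P (last xs) a \<noteq> None) then 1 else 0)"

lemma sig0_strat: assumes "is_mdp P" shows "sig0 P \<in> strategies P"
  unfolding strategies_def
proof (intro CollectI allI impI)
  fix xs :: "'a list"
  have "\<exists>a. P (last xs) a \<noteq> None" using assms unfolding is_mdp_def by blast
  then have "P (last xs) (SOME a. P (last xs) a \<noteq> None) \<noteq> None" by (rule someI_ex)
  then show "(\<forall>a. 0 \<le> sig0 P xs a) \<and> sum (sig0 P xs) UNIV = 1 \<and> (\<forall>a. 0 < sig0 P xs a \<longrightarrow> P (last xs) a \<noteq> None)"
    unfolding sig0_def by auto
qed

lemma Val_ennreal:
  assumes "is_mdp P"
  shows "ennreal (Val P T s) = (SUP \<sigma>\<in>strategies P. reach_prob P T \<sigma> s)"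
proof -
  have "(SUP \<sigma>\<in>strategies P. reach_prob P T \<sigma> s) \<le> 1"
  proof (rule SUP_least)
    fix \<sigma> assume "\<sigma> \<in> strategies P"
    then show "reach_prob P T \<sigma> s \<le> 1" using reach_rp[OF assms] rp_bounds[OF assms] by simp
  qed
  then have "(SUP \<sigma>\<in>strategies P. reach_prob P T \<sigma> s) < top"
    using ennreal_one_less_top le_less_trans by blast
  then show ?thesis unfolding Val_def by simp
qed

lemma rp_le_Val: "is_mdp P \<Longrightarrow> \<sigma> \<in> strategies P \<Longrightarrow> rp P T \<sigma> s \<le> Val P T s"
proof -
  assume a: "is_mdp P" "\<sigma> \<in> strategies P"
  have "ennreal (rp P T \<sigma> s) \<le> ennreal (Val P T s)"
    unfolding Val_ennreal[OF a(1)] reach_rp[OF a, symmetric] using a(2) by (rule SUP_upper)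
  moreover have "0 \<le> Val P T s" unfolding Val_def by simp
  ultimately show ?thesis by simp
qed

lemma Val_nonneg: "0 \<le> Val P T s" unfolding Val_def by simp

lemma Val_le1: "is_mdp P \<Longrightarrow> Val P T s \<le> 1"
proof -
  assume a: "is_mdp P"
  have "(SUP \<sigma>\<in>strategies P. reach_prob P T \<sigma> s) \<le> 1"
  proof (rule SUP_least)
    fix \<sigma> assume "\<sigma> \<in> strategies P"
    then show "reach_prob P T \<sigma> s \<le> 1" using reach_rp[OF a] rp_bounds[OF a] by simp
  qed
  then have "ennreal (Val P T s) \<le> ennreal 1" using Val_ennreal[OF a] by simp
  then show ?thesis by simp
qed

lemma Val_T: assumes a: "is_mdp P" and b: "s \<in> T" shows "Val P T s = 1"
proof -
  have "rp P T (sig0 P) s = 1" by (rule rp_T[OF b])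
  moreover have "rp P T (sig0 P) s \<le> Val P T s" by (rule rp_le_Val[OF a sig0_strat[OF a]])
  moreover have "Val P T s \<le> 1" by (rule Val_le1[OF a])
  ultimately show ?thesis by linarith
qed

lemma Val_approx:
  assumes "is_mdp P" "0 < e"
  shows "\<exists>\<sigma>\<in>strategies P. Val P T s - e < rp P T \<sigma> s"
proof (cases "Val P T s - e < 0")
  case True
  have "0 \<le> rp P T (sig0 P) s" using rp_bounds[OF assms(1) sig0_strat[OF assms(1)]] by blast
  then have "Val P T s - e < rp P T (sig0 P) s" using True by linarith
  then show ?thesis using sig0_strat[OF assms(1)] by blast
next
  case False
  have "ennreal (Val P T s - e) < ennreal (Val P T s)"
    using False assms(2) by (subst ennreal_less_iff) auto
  then have "ennreal (Val P T s - e) < (SUP \<sigma>\<in>strategies P. reach_prob P T \<sigma> s)"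
    using Val_ennreal[OF assms(1)] by simp
  then obtain \<sigma> where \<sigma>: "\<sigma> \<in> strategies P" "ennreal (Val P T s - e) < reach_prob P T \<sigma> s"
    by (auto simp: less_SUP_iff)
  then have "ennreal (Val P T s - e) < ennreal (rp P T \<sigma> s)" using reach_rp[OF assms(1)] by simp
  then have "Val P T s - e < rp P T \<sigma> s" using False by (subst (asm) ennreal_less_iff) auto
  then show ?thesis using \<sigma> by blast
qed

lemma bellman:
  assumes mdp: "is_mdp P" and sT: "s \<notin> T" and leg: "P s a \<noteq> None"
  shows "(\<Sum>t\<in>UNIV. trans P s a t * Val P T t) \<le> Val P T s"
proof (rule field_le_epsilon)
  fix e :: real assume e: "0 < e"
  have "\<forall>t. \<exists>\<sigma>. \<sigma> \<in> strategies P \<and> Val P T t - e < rp P T \<sigma> t"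
    using Val_approx[OF mdp e] by blast
  then obtain sel where sel: "\<And>t. sel t \<in> strategies P" "\<And>t. Val P T t - e < rp P T (sel t) t"
    by metis
  define \<sigma>' where "\<sigma>' = (\<lambda>xs. if xs = [s] then (\<lambda>b. if b = a then 1 else 0)
      else if 2 \<le> length xs \<and> hd xs = s then sel (xs!1) (tl xs) else sig0 P xs)"
  have st: "\<sigma>' \<in> strategies P" unfolding strategies_def
  proof (intro CollectI allI impI)
    fix xs :: "'a list" assume ne: "xs \<noteq> []"
    show "(\<forall>b. 0 \<le> \<sigma>' xs b) \<and> sum (\<sigma>' xs) UNIV = 1 \<and> (\<forall>b. 0 < \<sigma>' xs b \<longrightarrow> P (last xs) b \<noteq> None)"
    proof (cases "xs = [s]")
      case True then show ?thesis unfolding \<sigma>'_def using leg by auto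
    next
      case F1: False
      show ?thesis
      proof (cases "2 \<le> length xs \<and> hd xs = s")
        case True
        then have ne': "tl xs \<noteq> []" by (cases xs) auto
        have l: "last (tl xs) = last xs" using True by (cases xs) auto
        have "\<sigma>' xs = sel (xs!1) (tl xs)" unfolding \<sigma>'_def using F1 True by simp
        then show ?thesis using strat_nonneg[OF sel(1) ne'] strat_sum[OF sel(1) ne'] strat_legal[OF sel(1) ne'] l
          by simp
      next
        case False
        have "\<sigma>' xs = sig0 P xs" unfolding \<sigma>'_def using F1 False by (simp only: if_False)
        then show ?thesis using strat_nonneg[OF sig0_strat[OF mdp] ne] strat_sum[OF sig0_strat[OF mdp] ne]
            strat_legal[OF sig0_strat[OF mdp] ne] by simp
      qed
    qed
  qed
  have w: "wt P \<sigma>' s t = trans P s a t" for t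
  proof -
    have "(\<Sum>b\<in>UNIV. (if b = a then 1 else 0) * trans P s b t) = (\<Sum>b\<in>UNIV. if b = a then trans P s b t else 0)"
      by (rule sum.cong) auto
    also have "\<dots> = trans P s a t" by simp
    finally show ?thesis unfolding wt_def \<sigma>'_def by simp
  qed
  have r: "rp P T (\<lambda>xs. \<sigma>' (s#xs)) t = rp P T (sel t) t" for t
  proof (rule rp_cong)
    fix ys :: "'a list" assume "ys \<noteq> []" "hd ys = t"
    then show "\<sigma>' (s#ys) = sel t ys" unfolding \<sigma>'_def by (cases ys) auto
  qed
  have "(\<Sum>t\<in>UNIV. trans P s a t * Val P T t) - e = (\<Sum>t\<in>UNIV. trans P s a t * (Val P T t - e))"
    using trans_sum[OF mdp leg] by (simp add: right_diff_distrib sum_subtractf sum_distrib_right[symmetric])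
  also have "\<dots> \<le> (\<Sum>t\<in>UNIV. trans P s a t * rp P T (sel t) t)"
    by (intro sum_mono mult_left_mono trans_nonneg[OF mdp] less_imp_le sel(2))
  also have "\<dots> = rp P T \<sigma>' s" using rp_Suc[OF mdp st sT] by (simp add: w r)
  also have "\<dots> \<le> Val P T s" by (rule rp_le_Val[OF mdp st])
  finally show "(\<Sum>t\<in>UNIV. trans P s a t * Val P T t) \<le> Val P T s + e" by simp
qed

lemma opt_step:
  assumes mdp: "is_mdp P" and st: "\<sigma> \<in> strategies P" and opt: "rp P T \<sigma> s = Val P T s" and sT: "s \<notin> T"
  shows "\<And>a. 0 < \<sigma> [s] a \<Longrightarrow> (s,a) \<in> Opt P T"
    and "\<And>t. 0 < wt P \<sigma> s t \<Longrightarrow> rp P T (\<lambda>xs. \<sigma> (s#xs)) t = Val P T t"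
proof -
  define Q where "Q a = (\<Sum>t\<in>UNIV. trans P s a t * Val P T t)" for a
  have stS: "(\<lambda>xs. \<sigma> (s#xs)) \<in> strategies P" by (rule shift_strat[OF st])
  have X: "(\<Sum>t\<in>UNIV. wt P \<sigma> s t * Val P T t) = (\<Sum>a\<in>UNIV. \<sigma> [s] a * Q a)"
    unfolding wt_def Q_def sum_distrib_right sum_distrib_left mult.assoc by (rule sum.swap)
  have sn: "0 \<le> \<sigma> [s] a" for a by (rule strat_nonneg[OF st]) simp
  have le1t: "\<sigma> [s] a * Q a \<le> \<sigma> [s] a * Val P T s" for a
  proof (cases "0 < \<sigma> [s] a")
    case True
    then have "P s a \<noteq> None" using strat_legal[OF st, of "[s]" a] by simp
    then have "Q a \<le> Val P T s" unfolding Q_def by (rule bellman[OF mdp sT])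
    then show ?thesis using sn by (rule mult_left_mono)
  next
    case False then have "\<sigma> [s] a = 0" using sn[of a] by simp
    then show ?thesis by simp
  qed
  have S1: "(\<Sum>a\<in>UNIV. \<sigma> [s] a * Val P T s) = Val P T s"
    using strat_sum[OF st, of "[s]"] by (simp add: sum_distrib_right[symmetric])
  have eqr: "Val P T s = (\<Sum>t\<in>UNIV. wt P \<sigma> s t * rp P T (\<lambda>xs. \<sigma> (s#xs)) t)"
    using rp_Suc[OF mdp st sT] opt by simp
  have le2t: "wt P \<sigma> s t * rp P T (\<lambda>xs. \<sigma> (s#xs)) t \<le> wt P \<sigma> s t * Val P T t" for t
    by (rule mult_left_mono[OF rp_le_Val[OF mdp stS] wt_nonneg[OF mdp st]])
  have A1: "(\<Sum>t\<in>UNIV. wt P \<sigma> s t * rp P T (\<lambda>xs. \<sigma> (s#xs)) t) \<le> (\<Sum>t\<in>UNIV. wt P \<sigma> s t * Val P T t)"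
    by (rule sum_mono[OF le2t])
  have A2: "(\<Sum>a\<in>UNIV. \<sigma> [s] a * Q a) \<le> (\<Sum>a\<in>UNIV. \<sigma> [s] a * Val P T s)"
    by (rule sum_mono[OF le1t])
  have E1: "(\<Sum>t\<in>UNIV. wt P \<sigma> s t * Val P T t - wt P \<sigma> s t * rp P T (\<lambda>xs. \<sigma> (s#xs)) t) = 0"
    unfolding sum_subtractf using A1 A2 X S1 eqr by linarith
  have E2: "(\<Sum>a\<in>UNIV. \<sigma> [s] a * Val P T s - \<sigma> [s] a * Q a) = 0"
    unfolding sum_subtractf using A1 A2 X S1 eqr by linarith
  show "(s,a) \<in> Opt P T" if "0 < \<sigma> [s] a" for a
  proof -
    have "\<sigma> [s] a * Val P T s - \<sigma> [s] a * Q a = 0"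
      using E2 sum_nonneg_eq_0_iff[of UNIV "\<lambda>a. \<sigma> [s] a * Val P T s - \<sigma> [s] a * Q a"] le1t by simp
    then have "Q a = Val P T s" using that by (simp add: right_diff_distrib[symmetric])
    moreover have "P s a \<noteq> None" using strat_legal[OF st, of "[s]" a] that by simp
    ultimately show ?thesis unfolding Opt_def Q_def by simp
  qed
  show "rp P T (\<lambda>xs. \<sigma> (s#xs)) t = Val P T t" if "0 < wt P \<sigma> s t" for t
  proof -
    have "wt P \<sigma> s t * Val P T t - wt P \<sigma> s t * rp P T (\<lambda>xs. \<sigma> (s#xs)) t = 0"
      using E1 sum_nonneg_eq_0_iff[of UNIV "\<lambda>t. wt P \<sigma> s t * Val P T t - wt P \<sigma> s t * rp P T (\<lambda>xs. \<sigma> (s#xs)) t"] le2t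
      by simp
    then show ?thesis using that by (simp add: right_diff_distrib[symmetric])
  qed
qed

lemma trans_pruned:
  "0 < Val P T s \<Longrightarrow> trans (pruned P T) s a t = (if (s,a) \<in> Opt P T then trans P s a t * Val P T t / Val P T s else 0)"
  by (simp add: trans_def pruned_def)

lemma main_ind:
  assumes mdp: "is_mdp P"
  shows "\<sigma> \<in> strategies P \<Longrightarrow> rp P T \<sigma> s = Val P T s \<Longrightarrow> 0 < Val P T s \<Longrightarrow>
    hit_prob (pruned P T) T \<sigma> s r = hit_prob P T \<sigma> s r / Val P T s"
proof (induction r arbitrary: \<sigma> s)
  case 0
  then show ?case using Val_T[OF mdp, of s T] by (simp add: hit_prob_0)
next
  case (Suc r)
  note st = Suc.prems(1) and opt = Suc.prems(2) and pos = Suc.prems(3)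
  show ?case
  proof (cases "s \<in> T")
    case True then show ?thesis by (simp add: hit_prob_Suc_T)
  next
    case sT: False
    have stS: "(\<lambda>xs. \<sigma> (s#xs)) \<in> strategies P" by (rule shift_strat[OF st])
    have wtp: "wt (pruned P T) \<sigma> s t = wt P \<sigma> s t * Val P T t / Val P T s" for t
    proof -
      have "\<sigma> [s] a * trans (pruned P T) s a t = \<sigma> [s] a * trans P s a t * Val P T t / Val P T s" for a
      proof (cases "0 < \<sigma> [s] a")
        case True
        then have "(s,a) \<in> Opt P T" by (rule opt_step(1)[OF mdp st opt sT])
        then show ?thesis using pos by (simp add: trans_pruned)
      next
        case False then have "\<sigma> [s] a = 0" using strat_nonneg[OF st, of "[s]" a] by simp
        then show ?thesis by simp
      qed
      then show ?thesis unfolding wt_def by (simp add: sum_divide_distrib sum_distrib_right)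
    qed
    have tm: "wt (pruned P T) \<sigma> s t * hit_prob (pruned P T) T (\<lambda>xs. \<sigma> (s#xs)) t r
        = wt P \<sigma> s t * hit_prob P T (\<lambda>xs. \<sigma> (s#xs)) t r / Val P T s" for t
    proof (cases "0 < wt P \<sigma> s t")
      case False
      then have "wt P \<sigma> s t = 0" using wt_nonneg[OF mdp st, of s t] by simp
      then show ?thesis by (simp add: wtp)
    next
      case True
      then have optt: "rp P T (\<lambda>xs. \<sigma> (s#xs)) t = Val P T t" by (rule opt_step(2)[OF mdp st opt sT])
      show ?thesis
      proof (cases "0 < Val P T t")
        case True
        have "hit_prob (pruned P T) T (\<lambda>xs. \<sigma> (s#xs)) t r = hit_prob P T (\<lambda>xs. \<sigma> (s#xs)) t r / Val P T t"
          by (rule Suc.IH[OF stS optt True])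
        then show ?thesis using True pos by (simp add: wtp)
      next
        case False
        then have v0: "Val P T t = 0" using Val_nonneg[of P T t] by simp
        have "hit_prob P T (\<lambda>xs. \<sigma> (s#xs)) t r = 0"
          using hit_le_rp[OF mdp stS, of T t r] hit_nonneg[OF mdp stS, of T t r] optt v0 by simp
        then show ?thesis using v0 by (simp add: wtp)
      qed
    qed
    have "hit_prob (pruned P T) T \<sigma> s (Suc r) = (\<Sum>t\<in>UNIV. wt (pruned P T) \<sigma> s t * hit_prob (pruned P T) T (\<lambda>xs. \<sigma> (s#xs)) t r)"
      by (rule hit_prob_Suc[OF sT])
    also have "\<dots> = (\<Sum>t\<in>UNIV. wt P \<sigma> s t * hit_prob P T (\<lambda>xs. \<sigma> (s#xs)) t r / Val P T s)"
      by (rule sum.cong[OF refl], rule tm)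
    also have "\<dots> = hit_prob P T \<sigma> s (Suc r) / Val P T s"
      by (simp only: hit_prob_Suc[OF sT] sum_divide_distrib)
    finally show ?thesis .
  qed
qed

theorem lemma5:
  fixes P :: "('s::finite, 'a::finite) mdp" and T :: "'s set" and s0 :: 's
    and \<sigma> :: "'s list \<Rightarrow> 'a \<Rightarrow> real"
  assumes "is_mdp P"
    and "sinks P T"
    and "0 < Val P T s0"
    and "\<sigma> \<in> opt_strategies P T s0"
  shows "exp_len (pruned P T) T \<sigma> s0 = cond_exp_len P T \<sigma> s0"
proof -
  note mdp = assms(1) and pos = assms(3)
  define V where "V = Val P T s0"
  have st: "\<sigma> \<in> strategies P" and re: "reach_prob P T \<sigma> s0 = ennreal V"
    using assms(4) unfolding opt_strategies_def V_def by auto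
  have "ennreal (rp P T \<sigma> s0) = ennreal V" using re reach_rp[OF mdp st] by simp
  then have opt: "rp P T \<sigma> s0 = Val P T s0"
    using rp_bounds[OF mdp st] Val_nonneg[of P T s0] unfolding V_def by simp
  have Vpos: "0 < V" using pos unfolding V_def .
  have hp: "hit_prob (pruned P T) T \<sigma> s0 r = hit_prob P T \<sigma> s0 r / V" for r
    unfolding V_def by (rule main_ind[OF mdp st opt pos])
  have hpe: "ennreal (hit_prob (pruned P T) T \<sigma> s0 r) = ennreal (hit_prob P T \<sigma> s0 r) / ennreal V" for r
    unfolding hp using hit_nonneg[OF mdp st] Vpos by (simp add: divide_ennreal)
  have "reach_prob (pruned P T) T \<sigma> s0 = reach_prob P T \<sigma> s0 / ennreal V"
    unfolding reach_prob_def hpe by (rule ennreal_suminf_divide)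
  also have "\<dots> = 1" using re Vpos by (simp add: divide_ennreal)
  finally have r1: "reach_prob (pruned P T) T \<sigma> s0 = 1" .
  have "exp_len (pruned P T) T \<sigma> s0 = (\<Sum>r. of_nat r * ennreal (hit_prob (pruned P T) T \<sigma> s0 r))"
    unfolding exp_len_def r1 by simp
  also have "\<dots> = (\<Sum>r. of_nat r * ennreal (hit_prob P T \<sigma> s0 r) / ennreal V)"
    unfolding hpe ennreal_times_divide ..
  also have "\<dots> = (\<Sum>r. of_nat r * ennreal (hit_prob P T \<sigma> s0 r)) / ennreal V"
    by (rule ennreal_suminf_divide)
  also have "\<dots> = cond_exp_len P T \<sigma> s0"
    unfolding cond_exp_len_def re ..
  finally show ?thesis .
qed

end
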